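(* Let $T>0$, $x_0,y_0\in\mathbb{R}$ and $\gamma_P,\gamma_A>0$. For every contract $(W,a)\in\mathcal{C}_{PC}$, $$\mathbb{E}\left[\left|U_P\left(X_T^a-\int_0^T\kappa(a_t)\,dt\right)\right|^{\frac{\gamma_A}{\gamma_A+\gamma_P}}\right]^{\frac{\gamma_A+\gamma_P}{\gamma_A}}\geq \exp(-\gamma_P x_0)\exp\left(T\gamma_P\left(-\widetilde{\kappa}(1)+\frac{\gamma_P\gamma_A}{2(\gamma_A+\gamma_P)}\right)\right),$$ and consequently $$\mathbb{E}\left[U_P\left(X_T^a-W\right)\right]\leq U_P(x_0-y_0)\exp\left(\gamma_P T\left(-\widetilde{\kappa}(1)+\frac{\gamma_P\gamma_A}{2(\gamma_A+\gamma_P)}\right)\right).$$ Moreover, for the constant action $a^*_t:=\kappa^*(1)$, $t\in[0,T]$, $$\mathbb{E}\left[\left|U_P\left(X_T^{a^*}-\int_0^T\kappa(a^*_t)\,dt\right)\right|^{\frac{\gamma_A}{\gamma_A+\gamma_P}}\right]^{\frac{\gamma_A+\gamma_P}{\gamma_A}}= \exp(-\gamma_P x_0)\exp\left(\gamma_P T\left(-\widetilde{\kappa}(1)+\frac{\gamma_P\gamma_A}{2(\gamma_A+\gamma_P)}\right)\right).$$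
   Context: Fix $T>0$. Let $(\Omega,\mathcal{F},\mathbb{P})$ be a probability space carrying a standard one-dimensional Brownian motion $B=(B_t)_{t\in[0,T]}$, and let $\mathbb{F}=(\mathcal{F}_t)_{t\in[0,T]}$ be its natural completed filtration. Let $\mathbb{H}_2$ be the set of $\mathbb{F}$-predictable processes $a=(a_t)_{t\in[0,T]}$ with values in $[0,\infty)$ such that $\mathbb{E}[\exp(q\int_0^T|a_t|^2dt)]<\infty$ for all $q>0$. For $a\in\mathbb{H}_2$ and a fixed $x_0\in\mathbb{R}$, set $X_t^a=x_0+\int_0^t a_s\,ds+B_t$. Let $\mathcal{W}$ be the set of $\mathcal{F}_T$-measurable random variables $W$ with $\mathbb{E}[\exp(qW)]<\infty$ for all $q\in\mathbb{R}\setminus\{0\}$, and $\mathcal{C}=\{(W,a):W\in\mathcal{W},a\in\mathbb{H}_2\}$. The cost function $\kappa:[0,\infty)\to\mathbb{R}$ is strictly convex, continuous, non-decreasing, with invertible derivative $\kappa'$; $\widetilde{\kappa}(p)=\sup_{x\ge0}(px-\kappa(x))$ for $p\ge0$ and $\kappa^*(p)=\arg\sup_{x\ge0}(px-\kappa(x))=(\kappa')^{-1}(p)\ge0$; in particular $\widetilde{\kappa}(1)=\kappa^*(1)-\kappa(\kappa^*(1))$. With $\gamma_P,\gamma_A>0$, $U_P(x)=-\exp(-\gamma_P x)$ and $U_A(x)=-\exp(-\gamma_A x)$. For $y_0\in\mathbb{R}$, the participation constraint (PC) of a contract $(W,a)\in\mathcal{C}$ is $\mathbb{E}[U_A(W-\int_0^T\kappa(a_t)dt)]\ge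 U_A(y_0)$, and $\mathcal{C}_{PC}$ is the set of contracts in $\mathcal{C}$ satisfying the PC. *)

theory Defs
  imports "HOL-Probability.Probability"
begin

definition eexp :: "ereal \<Rightarrow> ennreal" where
  "eexp x = (case x of ereal r \<Rightarrow> ennreal (exp r) | PInfty \<Rightarrow> \<infinity> | MInfty \<Rightarrow> 0)"

text \<open>power x^r of a nonnegative extended real, for exponents r > 0\<close>
definition ennpowr :: "ennreal \<Rightarrow> real \<Rightarrow> ennreal" where
  "ennpowr x r = (if x = \<infinity> then \<infinity> else ennreal (enn2real x powr r))"

text \<open>|U(x)| = exp(-gamma x) for the exponential utility U(x) = -exp(-gamma x), on extended reals\<close>
definition absU :: "real \<Rightarrow> ereal \<Rightarrow> ennreal" where
  "absU \<gamma> x = eexp (- ereal \<gamma> * x)"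

definition U :: "real \<Rightarrow> real \<Rightarrow> real" where
  "U \<gamma> x = - exp (- \<gamma> * x)"

definition strictly_convex_on :: "real set \<Rightarrow> (real \<Rightarrow> real) \<Rightarrow> bool" where
  "strictly_convex_on S f \<longleftrightarrow> convex S \<and>
     (\<forall>x\<in>S. \<forall>y\<in>S. \<forall>u. x \<noteq> y \<and> 0 < u \<and> u < 1 \<longrightarrow>
        f (u * x + (1 - u) * y) < u * f x + (1 - u) * f y)"

definition kappa_tilde :: "(real \<Rightarrow> real) \<Rightarrow> real \<Rightarrow> real" where
  "kappa_tilde \<kappa> p = (SUP x\<in>{0..}. p * x - \<kappa> x)"

definition kappa_star :: "(real \<Rightarrow> real) \<Rightarrow> real \<Rightarrow> real" where
  "kappa_star \<kappa> p = (THE x. x \<ge> 0 \<and> (\<forall>y\<ge>0. p * y - \<kappa> y \<le> p * x - \<kappa> x))"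

definition cost_function :: "(real \<Rightarrow> real) \<Rightarrow> bool" where
  "cost_function \<kappa> \<longleftrightarrow>
     strictly_convex_on {0..} \<kappa> \<and> continuous_on {0..} \<kappa> \<and> mono_on {0..} \<kappa> \<and>
     (\<exists>\<kappa>'. (\<forall>x\<ge>0. (\<kappa> has_real_derivative \<kappa>' x) (at x within {0..})) \<and>
            bij_betw \<kappa>' {0..} {0..})"

definition natural_sigma :: "'a measure \<Rightarrow> (real \<Rightarrow> 'a \<Rightarrow> real) \<Rightarrow> real \<Rightarrow> 'a set set" where
  "natural_sigma M B s = sigma_sets (space M)
     {B u -` A \<inter> space M | u A. u \<in> {0..s} \<and> A \<in> sets borel}"

definition brownian_motion :: "'a measure \<Rightarrow> real \<Rightarrow> (real \<Rightarrow> 'a \<Rightarrow> real) \<Rightarrow> bool" where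
  "brownian_motion M T B \<longleftrightarrow>
     prob_space M \<and>
     (\<forall>t\<in>{0..T}. B t \<in> borel_measurable M) \<and>
     (\<forall>\<omega>\<in>space M. B 0 \<omega> = 0 \<and> continuous_on {0..T} (\<lambda>t. B t \<omega>)) \<and>
     (\<forall>s t. 0 \<le> s \<and> s < t \<and> t \<le> T \<longrightarrow>
        distributed M lborel (\<lambda>\<omega>. B t \<omega> - B s \<omega>) (normal_density 0 (sqrt (t - s))) \<and>
        prob_space.indep_set M (natural_sigma M B s)
          (sigma_sets (space M) {(\<lambda>\<omega>. B t \<omega> - B s \<omega>) -` A \<inter> space M | A. A \<in> sets borel}))"

definition filt :: "'a measure \<Rightarrow> (real \<Rightarrow> 'a \<Rightarrow> real) \<Rightarrow> real \<Rightarrow> 'a set set" where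
  "filt M B t = sigma_sets (space M) (natural_sigma M B t \<union> null_sets M)"

definition predictable_sigma :: "'a measure \<Rightarrow> real \<Rightarrow> (real \<Rightarrow> 'a \<Rightarrow> real) \<Rightarrow> (real \<times> 'a) measure" where
  "predictable_sigma M T B = sigma ({0..T} \<times> space M)
     ({{0} \<times> A | A. A \<in> filt M B 0} \<union>
      {{s<..t} \<times> A | s t A. 0 \<le> s \<and> s < t \<and> t \<le> T \<and> A \<in> filt M B s})"

definition H2 :: "'a measure \<Rightarrow> real \<Rightarrow> (real \<Rightarrow> 'a \<Rightarrow> real) \<Rightarrow> (real \<Rightarrow> 'a \<Rightarrow> real) set" where
  "H2 M T B = {a. (\<lambda>(t, \<omega>). a t \<omega>) \<in> measurable (predictable_sigma M T B) borel \<and>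
     (\<forall>t\<in>{0..T}. \<forall>\<omega>\<in>space M. a t \<omega> \<ge> 0) \<and>
     (\<forall>q>0. (\<integral>\<^sup>+\<omega>. eexp (ereal q * enn2ereal
              (\<integral>\<^sup>+t. indicator {0..T} t * ennreal ((a t \<omega>)\<^sup>2) \<partial>lborel)) \<partial>M) < \<infinity>)}"

definition Wset :: "'a measure \<Rightarrow> real \<Rightarrow> (real \<Rightarrow> 'a \<Rightarrow> real) \<Rightarrow> ('a \<Rightarrow> real) set" where
  "Wset M T B = {W. W \<in> measurable (sigma (space M) (filt M B T)) borel \<and>
     (\<forall>q. q \<noteq> 0 \<longrightarrow> (\<integral>\<^sup>+\<omega>. ennreal (exp (q * W \<omega>)) \<partial>M) < \<infinity>)}"

definition XT :: "real \<Rightarrow> real \<Rightarrow> (real \<Rightarrow> 'a \<Rightarrow> real) \<Rightarrow> (real \<Rightarrow> 'a \<Rightarrow> real) \<Rightarrow> 'a \<Rightarrow> real" where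
  "XT x0 T B a \<omega> = x0 + (\<integral>t\<in>{0..T}. a t \<omega> \<partial>lborel) + B T \<omega>"

text \<open>int_0^T kappa(a_t) dt, possibly +infinity (kappa(a_t) \<ge> kappa 0 since a \<ge> 0, kappa nondecreasing)\<close>
definition cost_int :: "(real \<Rightarrow> real) \<Rightarrow> real \<Rightarrow> (real \<Rightarrow> 'a \<Rightarrow> real) \<Rightarrow> 'a \<Rightarrow> ereal" where
  "cost_int \<kappa> T a \<omega> = ereal (T * \<kappa> 0) +
     enn2ereal (\<integral>\<^sup>+t. indicator {0..T} t * ennreal (\<kappa> (a t \<omega>) - \<kappa> 0) \<partial>lborel)"

text \<open>participation constraint E[U_A(W - int kappa(a))] \<ge> U_A(y0), with E of the negative
  variable written as minus the expectation of its absolute value\<close>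
definition PC :: "'a measure \<Rightarrow> real \<Rightarrow> (real \<Rightarrow> real) \<Rightarrow> real \<Rightarrow> real \<Rightarrow> ('a \<Rightarrow> real) \<Rightarrow> (real \<Rightarrow> 'a \<Rightarrow> real) \<Rightarrow> bool" where
  "PC M T \<kappa> \<gamma>A y0 W a \<longleftrightarrow>
     - enn2ereal (\<integral>\<^sup>+\<omega>. absU \<gamma>A (ereal (W \<omega>) - cost_int \<kappa> T a \<omega>) \<partial>M) \<ge> ereal (U \<gamma>A y0)"

end

theory Submission
  imports Defs
begin

lemma kappa_facts:
  assumes "cost_function \<kappa>"
  obtains xs where "xs \<ge> 0" "\<And>y. y \<ge> 0 \<Longrightarrow> y - \<kappa> y \<le> xs - \<kappa> xs"
    "kappa_tilde \<kappa> 1 = xs - \<kappa> xs" "kappa_star \<kappa> 1 = xs"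
proof -
  from assms obtain k' where der: "\<And>x. x \<ge> 0 \<Longrightarrow> (\<kappa> has_real_derivative k' x) (at x within {0..})"
    and bij: "bij_betw k' {0..} {0..}" and sc: "strictly_convex_on {0..} \<kappa>"
    unfolding cost_function_def by blast
  from bij obtain xs where xs: "xs \<ge> 0" "k' xs = 1"
    unfolding bij_betw_def by (metis atLeast_iff image_iff zero_le_one)
  have cvx: "convex_on {0..} \<kappa>"
  proof (rule convex_onI)
    fix t x y :: real assume t: "0 < t" "t < 1" and xy: "x \<in> {0..}" "y \<in> {0..}"
    show "\<kappa> ((1 - t) *\<^sub>R x + t *\<^sub>R y) \<le> (1 - t) * \<kappa> x + t * \<kappa> y"
    proof (cases "x = y")
      case True then show ?thesis by (simp add: algebra_simps)
    next
      case False
      have H: "\<forall>x\<in>{0..}. \<forall>y\<in>{0..}. \<forall>u. x \<noteq> y \<and> 0 < u \<and> u < 1 \<longrightarrow>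
        \<kappa> (u * x + (1 - u) * y) < u * \<kappa> x + (1 - u) * \<kappa> y" using sc unfolding strictly_convex_on_def by blast
      have "\<kappa> ((1-t) * x + (1 - (1-t)) * y) < (1-t) * \<kappa> x + (1 - (1-t)) * \<kappa> y"
        using H[rule_format, of x y "1-t"] t xy False by simp
      then show ?thesis by simp
    qed
  qed simp
  have tang: "\<kappa> y - \<kappa> xs \<ge> 1 * (y - xs)" if y: "y \<ge> 0" for y
  proof (cases "xs > 0")
    case True
    show ?thesis
      by (rule convex_on_imp_above_tangent[OF cvx]) (use True y der[OF xs(1)] xs(2) in auto)
  next
    case False
    hence xs0: "xs = 0" using xs by simp
    show ?thesis
    proof (cases "y = 0")
      case True then show ?thesis using xs0 by simp
    next
      case False
      hence yp: "y > 0" using y by simp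
      have lim: "((\<lambda>z. (\<kappa> z - \<kappa> 0) / (z - 0)) \<longlongrightarrow> 1) (at 0 within {0<..})"
      proof -
        have "((\<lambda>z. (\<kappa> z - \<kappa> 0) / (z - 0)) \<longlongrightarrow> 1) (at 0 within {0..})"
          using der[of 0] xs xs0 unfolding has_field_derivative_iff by auto
        then show ?thesis by (rule tendsto_mono[rotated]) (rule at_le, auto)
      qed
      have ev: "eventually (\<lambda>z. (\<kappa> z - \<kappa> 0) / (z - 0) \<le> (\<kappa> y - \<kappa> 0) / y) (at 0 within {0<..})"
      proof -
        have "eventually (\<lambda>z. z \<in> {0<..<y}) (at 0 within {0<..})"
          using yp by (auto simp: eventually_at_filter eventually_nhds intro!: exI[of _ "{-y<..<y}"])
        then show ?thesis
        proof eventually_elim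
          case (elim z)
          have "(\<kappa> 0 - \<kappa> z) / (0 - z) \<le> (\<kappa> 0 - \<kappa> y) / (0 - y)"
            using convex_on_slope_le(1)[OF cvx, of 0 y z] elim yp by auto
          moreover have "(\<kappa> 0 - \<kappa> z) / (0 - z) = (\<kappa> z - \<kappa> 0) / (z - 0)"
            by (metis minus_diff_eq minus_divide_divide)
          moreover have "(\<kappa> 0 - \<kappa> y) / (0 - y) = (\<kappa> y - \<kappa> 0) / y"
            by (metis diff_zero minus_diff_eq minus_divide_divide)
          ultimately show ?case by simp
        qed
      qed
      have "1 \<le> (\<kappa> y - \<kappa> 0) / y"
        by (rule tendsto_le[OF _ tendsto_const lim ev]) (simp add: trivial_limit_at_right_real)
      then show ?thesis using xs0 yp by (simp add: divide_simps)
    qed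
  qed
  have max: "y - \<kappa> y \<le> xs - \<kappa> xs" if "y \<ge> 0" for y using tang[OF that] by simp
  have "kappa_tilde \<kappa> 1 = xs - \<kappa> xs"
    unfolding kappa_tilde_def
    by (rule cSup_eq_maximum) (use xs max in auto)
  moreover have "kappa_star \<kappa> 1 = xs"
    unfolding kappa_star_def
  proof (rule the_equality)
    show "xs \<ge> 0 \<and> (\<forall>y\<ge>0. 1 * y - \<kappa> y \<le> 1 * xs - \<kappa> xs)" using xs max by simp
  next
    fix z assume z: "z \<ge> 0 \<and> (\<forall>y\<ge>0. 1 * y - \<kappa> y \<le> 1 * z - \<kappa> z)"
    show "z = xs"
    proof (rule ccontr)
      assume ne: "z \<noteq> xs"
      have eq: "z - \<kappa> z = xs - \<kappa> xs" using z max[of z] xs by force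
      have H: "\<forall>x\<in>{0..}. \<forall>y\<in>{0..}. \<forall>u. x \<noteq> y \<and> 0 < u \<and> u < 1 \<longrightarrow>
        \<kappa> (u * x + (1 - u) * y) < u * \<kappa> x + (1 - u) * \<kappa> y" using sc unfolding strictly_convex_on_def by blast
      have "\<kappa> ((1/2) * z + (1 - 1/2) * xs) < (1/2) * \<kappa> z + (1 - 1/2) * \<kappa> xs"
        using H[rule_format, of z xs "1/2"] ne z xs by simp
      moreover have "(1/2) * z + (1 - 1/2) * xs - \<kappa> ((1/2) * z + (1 - 1/2) * xs) \<le> xs - \<kappa> xs"
        by (rule max) (use z xs in auto)
      ultimately show False using eq by simp
    qed
  qed
  ultimately show ?thesis using that xs max by blast
qed


lemma normal_shift:
  assumes "\<sigma> > 0"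
  shows "normal_density 0 \<sigma> x * exp (s * x) = exp (s^2 * \<sigma>^2 / 2) * normal_density (s * \<sigma>^2) \<sigma> x"
proof -
  have "-(x - 0)\<^sup>2/ (2 * \<sigma>\<^sup>2) + s * x = s^2 * \<sigma>^2 / 2 + -(x - s * \<sigma>^2)\<^sup>2/ (2 * \<sigma>\<^sup>2)"
    using assms by (simp add: field_simps power2_eq_square)
  then have "exp (-(x - 0)\<^sup>2/ (2 * \<sigma>\<^sup>2)) * exp (s * x) = exp (s^2 * \<sigma>^2 / 2) * exp (-(x - s * \<sigma>^2)\<^sup>2/ (2 * \<sigma>\<^sup>2))"
    by (simp flip: exp_add)
  then show ?thesis unfolding normal_density_def by (simp add: algebra_simps)
qed

lemma nn_integral_normal: "\<sigma> > 0 \<Longrightarrow> (\<integral>\<^sup>+x. ennreal (normal_density \<mu> \<sigma> x) \<partial>lborel) = 1"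
  by (subst nn_integral_eq_integral) (auto simp: integrable_normal_density integral_normal_density)

lemma gauss_mgf:
  assumes BM: "brownian_motion M T B" and T: "T > 0"
  shows "(\<integral>\<^sup>+\<omega>. ennreal (exp (s * B T \<omega>)) \<partial>M) = ennreal (exp (s^2 * T / 2))"
proof -
  have d: "distributed M lborel (\<lambda>\<omega>. B T \<omega> - B 0 \<omega>) (normal_density 0 (sqrt (T - 0)))"
  proof -
    have "\<forall>s t. 0 \<le> s \<and> s < t \<and> t \<le> T \<longrightarrow> distributed M lborel (\<lambda>\<omega>. B t \<omega> - B s \<omega>) (normal_density 0 (sqrt (t - s)))"
      using BM unfolding brownian_motion_def by blast
    from this[rule_format, of 0 T] show ?thesis using T by simp
  qed
  have z: "\<omega> \<in> space M \<Longrightarrow> B 0 \<omega> = 0" for \<omega> using BM unfolding brownian_motion_def by auto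
  have "(\<integral>\<^sup>+\<omega>. ennreal (exp (s * B T \<omega>)) \<partial>M) = (\<integral>\<^sup>+\<omega>. ennreal (exp (s * (B T \<omega> - B 0 \<omega>))) \<partial>M)"
    by (rule nn_integral_cong) (simp add: z)
  also have "\<dots> = (\<integral>\<^sup>+x. ennreal (normal_density 0 (sqrt (T - 0)) x) * ennreal (exp (s * x)) \<partial>lborel)"
    by (rule distributed_nn_integral[OF d, symmetric]) simp
  also have "\<dots> = (\<integral>\<^sup>+x. ennreal (exp (s^2 * T / 2)) * ennreal (normal_density (s * T) (sqrt T) x) \<partial>lborel)"
    using normal_shift[of "sqrt T" _ s] T by (simp flip: ennreal_mult)
  also have "\<dots> = ennreal (exp (s^2 * T / 2))"
    by (subst nn_integral_cmult) (use T in \<open>auto simp: nn_integral_normal\<close>)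
  finally show ?thesis .
qed


lemma filt_sub:
  assumes BM: "brownian_motion M T B" and s: "0 \<le> s" "s \<le> T"
  shows "filt M B s \<subseteq> sets M"
proof -
  have "natural_sigma M B s \<subseteq> sets M"
    unfolding natural_sigma_def
  proof (rule sets.sigma_sets_subset, safe)
    fix u and A :: "real set" assume "u \<in> {0..s}" "A \<in> sets borel"
    moreover have "B u \<in> borel_measurable M" using BM \<open>u \<in> {0..s}\<close> s unfolding brownian_motion_def by auto
    ultimately show "B u -` A \<inter> space M \<in> sets M" by (simp add: measurable_sets)
  qed
  then show ?thesis unfolding filt_def
    by (intro sets.sigma_sets_subset) (auto dest: null_setsD2)
qed

lemma pred_meas:
  assumes BM: "brownian_motion M T B" and T: "T > 0" and a: "a \<in> H2 M T B"
  shows "(\<lambda>(\<omega>, t). if (t, \<omega>) \<in> {0..T} \<times> space M then a t \<omega> else 0) \<in> borel_measurable (M \<Otimes>\<^sub>M lborel)"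
proof -
  define \<Omega> where "\<Omega> = {0..T} \<times> space M"
  define G where "G = ({{0} \<times> A | A. A \<in> filt M B 0} \<union>
      {{s<..t} \<times> A | s t A. 0 \<le> s \<and> s < t \<and> t \<le> T \<and> A \<in> filt M B s})"
  let ?N = "lborel \<Otimes>\<^sub>M M"
  have \<Omega>N: "\<Omega> \<in> sets ?N" unfolding \<Omega>_def by auto
  have GN: "G \<subseteq> sets ?N"
  proof -
    have "filt M B 0 \<subseteq> sets M" using filt_sub[OF BM] T by auto
    moreover have "A \<in> filt M B s \<Longrightarrow> 0 \<le> s \<Longrightarrow> s < t \<Longrightarrow> t \<le> T \<Longrightarrow> A \<in> sets M" for A s t
      using filt_sub[OF BM, of s] by auto
    ultimately show ?thesis unfolding G_def by auto
  qed
  have GO: "G \<subseteq> Pow \<Omega>"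
  proof -
    have *: "A \<in> filt M B s \<Longrightarrow> 0 \<le> s \<Longrightarrow> s \<le> T \<Longrightarrow> A \<subseteq> space M" for A s
      using filt_sub[OF BM, of s] sets.sets_into_space by blast
    show ?thesis unfolding G_def \<Omega>_def using T
      by (auto dest!: *)
  qed
  have sp: "space (predictable_sigma M T B) = \<Omega>"
    unfolding predictable_sigma_def using GO by (simp add: G_def \<Omega>_def)
  have ss: "sets (predictable_sigma M T B) = sigma_sets \<Omega> G"
    unfolding predictable_sigma_def using GO by (simp add: G_def \<Omega>_def)
  have "sigma_sets \<Omega> G \<subseteq> sets (restrict_space ?N \<Omega>)"
  proof (rule sets.sigma_sets_subset')
    have e: "\<Omega> \<inter> space ?N = \<Omega>" using sets.sets_into_space[OF \<Omega>N] by blast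
    have r: "x \<in> sets (restrict_space ?N \<Omega>) \<longleftrightarrow> (x \<subseteq> \<Omega> \<and> x \<in> sets ?N)" for x
      by (rule sets_restrict_space_iff) (subst e, rule \<Omega>N)
    show "G \<subseteq> sets (restrict_space ?N \<Omega>)" using GN GO r by blast
    show "\<Omega> \<in> sets (restrict_space ?N \<Omega>)" using \<Omega>N r by blast
  qed
  then have mono: "measurable (predictable_sigma M T B) borel \<subseteq> measurable (restrict_space ?N \<Omega>) borel"
    by (intro measurable_mono) (auto simp: ss sp space_restrict_space2[OF \<Omega>N])
  have "(\<lambda>(t, \<omega>). a t \<omega>) \<in> measurable (predictable_sigma M T B) borel"
    using a unfolding H2_def by auto
  with mono have "(\<lambda>(t, \<omega>). a t \<omega>) \<in> measurable (restrict_space ?N \<Omega>) borel" by auto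
  then have "(\<lambda>x. if x \<in> \<Omega> then (\<lambda>(t, \<omega>). a t \<omega>) x else 0) \<in> borel_measurable ?N"
    using \<Omega>N by (subst (asm) measurable_restrict_space_iff) auto
  then have "(\<lambda>(\<omega>, t). (\<lambda>x. if x \<in> \<Omega> then (\<lambda>(t, \<omega>). a t \<omega>) x else 0) (t, \<omega>)) \<in> borel_measurable (M \<Otimes>\<^sub>M lborel)"
    by (subst (asm) measurable_pair_swap_iff) simp
  moreover have "(\<lambda>(\<omega>, t). (\<lambda>x. if x \<in> \<Omega> then (\<lambda>(t, \<omega>). a t \<omega>) x else 0) (t, \<omega>)) = (\<lambda>(\<omega>, t). if (t, \<omega>) \<in> {0..T} \<times> space M then a t \<omega> else 0)"
    by (auto simp: fun_eq_iff \<Omega>_def)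
  ultimately show ?thesis by simp
qed


lemma XT_meas:
  assumes BM: "brownian_motion M T B" and T: "T > 0" and a: "a \<in> H2 M T B"
  shows "(\<lambda>\<omega>. XT x0 T B a \<omega>) \<in> borel_measurable M"
proof -
  let ?g = "\<lambda>\<omega> t. if (t, \<omega>) \<in> {0..T} \<times> space M then a t \<omega> else 0"
  have g: "case_prod ?g \<in> borel_measurable (M \<Otimes>\<^sub>M lborel)" using pred_meas[OF BM T a] by simp
  have i: "(\<lambda>\<omega>. \<integral>t. ?g \<omega> t \<partial>lborel) \<in> borel_measurable M"
    by (rule lborel.borel_measurable_lebesgue_integral[OF g])
  have "(\<lambda>\<omega>. set_lebesgue_integral lborel {0..T} (\<lambda>t. a t \<omega>)) \<in> borel_measurable M"
  proof (subst measurable_cong)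
    fix \<omega> assume "\<omega> \<in> space M"
    then show "set_lebesgue_integral lborel {0..T} (\<lambda>t. a t \<omega>) = (\<integral>t. ?g \<omega> t \<partial>lborel)"
      unfolding set_lebesgue_integral_def by (intro Bochner_Integration.integral_cong) (auto simp: indicator_def)
  qed (rule i)
  moreover have "B T \<in> borel_measurable M" using BM T unfolding brownian_motion_def by auto
  ultimately show ?thesis unfolding XT_def by measurable
qed

lemma Icost_meas:
  assumes BM: "brownian_motion M T B" and T: "T > 0" and a: "a \<in> H2 M T B"
    and kc: "continuous_on {0..} \<kappa>"
  shows "(\<lambda>\<omega>. \<integral>\<^sup>+t. indicator {0..T} t * ennreal (\<kappa> (a t \<omega>) - \<kappa> 0) \<partial>lborel) \<in> borel_measurable M"
proof -
  let ?g = "\<lambda>\<omega> t. if (t, \<omega>) \<in> {0..T} \<times> space M then a t \<omega> else 0"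
  have g: "case_prod ?g \<in> borel_measurable (M \<Otimes>\<^sub>M lborel)" using pred_meas[OF BM T a] by simp
  have "continuous_on UNIV (\<lambda>x. \<kappa> (max 0 x))"
    by (rule continuous_on_compose2[OF kc]) (auto intro!: continuous_intros)
  then have kk: "(\<lambda>x. \<kappa> (max 0 x)) \<in> borel_measurable borel" by (rule borel_measurable_continuous_onI)
  have g2: "(\<lambda>(\<omega>, t). ennreal (indicator {0..T} t * (\<kappa> (max 0 (?g \<omega> t)) - \<kappa> 0))) \<in> borel_measurable (M \<Otimes>\<^sub>M lborel)"
  proof -
    have "(\<lambda>x. \<kappa> (max 0 (case_prod ?g x))) \<in> borel_measurable (M \<Otimes>\<^sub>M lborel)"
      using measurable_compose[OF g kk] by (simp add: comp_def)
    then show ?thesis by (simp add: case_prod_beta') measurable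
  qed
  have i: "(\<lambda>\<omega>. \<integral>\<^sup>+t. ennreal (indicator {0..T} t * (\<kappa> (max 0 (?g \<omega> t)) - \<kappa> 0)) \<partial>lborel) \<in> borel_measurable M"
    using lborel.borel_measurable_nn_integral[of "\<lambda>\<omega> t. ennreal (indicator {0..T} t * (\<kappa> (max 0 (?g \<omega> t)) - \<kappa> 0))" M] g2
    by simp
  show ?thesis
  proof (subst measurable_cong)
    fix \<omega> assume w: "\<omega> \<in> space M"
    have nn: "t \<in> {0..T} \<Longrightarrow> a t \<omega> \<ge> 0" for t using a w unfolding H2_def by auto
    show "(\<integral>\<^sup>+t. indicator {0..T} t * ennreal (\<kappa> (a t \<omega>) - \<kappa> 0) \<partial>lborel) =
       (\<integral>\<^sup>+t. ennreal (indicator {0..T} t * (\<kappa> (max 0 (?g \<omega> t)) - \<kappa> 0)) \<partial>lborel)"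
      by (intro nn_integral_cong) (auto simp: indicator_def w nn max_absorb2)
  qed (rule i)
qed


lemma absU_ereal: "absU \<gamma> (ereal u) = ennreal (exp (- \<gamma> * u))"
  unfolding absU_def eexp_def by simp

lemma ennpowr_exp: "ennpowr (ennreal (exp y)) r = ennreal (exp (r * y))"
  unfolding ennpowr_def by (simp add: powr_def mult.commute)

lemma ennpowr_mono: "x \<le> y \<Longrightarrow> ennpowr x r \<le> ennpowr y r" if "r > 0"
proof -
  assume xy: "x \<le> y"
  show ?thesis
  proof (cases "y = \<infinity>")
    case True then show ?thesis unfolding ennpowr_def by simp
  next
    case False
    then have "x \<noteq> \<infinity>" using xy by (auto simp: top_unique)
    moreover have "enn2real x \<le> enn2real y" using xy False by (simp add: enn2real_mono top.not_eq_extremum)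
    ultimately show ?thesis using False that unfolding ennpowr_def
      by (auto intro!: ennreal_leI powr_mono2)
  qed
qed

lemma absU_lower:
  assumes "z \<le> ereal v" "\<gamma> > 0"
  shows "ennreal (exp (- \<gamma> * v)) \<le> absU \<gamma> z"
proof (cases z)
  case (real u)
  then show ?thesis using assms by (simp add: absU_ereal)
next
  case PInf then show ?thesis using assms by simp
next
  case MInf
  then have "- ereal \<gamma> * z = \<infinity>" using assms by simp
  then show ?thesis unfolding absU_def by (simp only: ) (simp add: eexp_def)
qed

lemma absU_inf: "\<gamma> > 0 \<Longrightarrow> absU \<gamma> (ereal w - \<infinity>) = \<infinity>"
  unfolding absU_def eexp_def by simp

lemma absU_minf: "\<gamma> > 0 \<Longrightarrow> absU \<gamma> (-\<infinity>) = \<infinity>"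
  unfolding absU_def eexp_def by simp

lemma ennpowr_inf: "ennpowr \<infinity> r = \<infinity>" unfolding ennpowr_def by simp

lemma young_pt:
  fixes X W k \<alpha> b \<gamma>P \<gamma>A :: real
  assumes gP: "\<gamma>P > 0" and gA: "\<gamma>A > 0" and al: "\<alpha> > 0" and b: "b > 0"
  defines "r \<equiv> \<gamma>A / (\<gamma>A + \<gamma>P)"
  shows "exp (r * (- \<gamma>P * (X - k))) \<le>
     \<alpha> powr r * b powr (1 - r) * (r / \<alpha> * exp (- \<gamma>P * (X - W)) + (1 - r) / b * exp (- \<gamma>A * (W - k)))"
proof -
  have r: "0 < r" "r < 1" using gP gA unfolding r_def by (auto simp: field_simps)
  define u where "u = exp (- \<gamma>P * (X - W)) / \<alpha>"
  define v where "v = exp (- \<gamma>A * (W - k)) / b"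
  have uv: "u > 0" "v > 0" using al b unfolding u_def v_def by auto
  have y: "u powr r * v powr (1 - r) \<le> r * u + (1 - r) * v"
    by (rule Youngs_inequality_0) (use r uv in auto)
  have e: "\<gamma>A * (1 - r) = \<gamma>P * r" using gP gA unfolding r_def by (simp add: field_simps)
  have "\<alpha> powr r * b powr (1 - r) * (u powr r * v powr (1 - r))
      = (\<alpha> * u) powr r * (b * v) powr (1 - r)"
    using al b uv by (simp add: powr_mult)
  also have "\<dots> = exp (- \<gamma>P * (X - W)) powr r * exp (- \<gamma>A * (W - k)) powr (1 - r)"
    using al b unfolding u_def v_def by simp
  also have "\<dots> = exp (r * (- \<gamma>P * (X - k)))"
  proof -
    have "(1-r)*(-\<gamma>A*(W-k)) = -(\<gamma>A*(1-r))*(W-k)" by (simp add: algebra_simps)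
    also have "\<dots> = r*(-\<gamma>P*(W-k))" by (simp only: e) (simp add: algebra_simps)
    finally have "r * (-\<gamma>P*(X-W)) + (1-r)*(-\<gamma>A*(W-k)) = r*(-\<gamma>P*(X-k))" by (simp add: algebra_simps)
    then show ?thesis unfolding powr_def by (simp add: exp_add[symmetric] mult.commute)
  qed
  finally have eq: "\<alpha> powr r * b powr (1 - r) * (u powr r * v powr (1 - r)) = exp (r * (- \<gamma>P * (X - k)))" .
  have "\<alpha> powr r * b powr (1 - r) * (u powr r * v powr (1 - r)) \<le> \<alpha> powr r * b powr (1 - r) * (r * u + (1 - r) * v)"
    by (rule mult_left_mono[OF y]) simp
  then show ?thesis using eq unfolding u_def v_def by (simp add: algebra_simps)
qed


lemma cost_lower:
  fixes a :: "real \<Rightarrow> 'a \<Rightarrow> real"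
  assumes nn: "\<And>t. t \<in> {0..T} \<Longrightarrow> a t \<omega> \<ge> 0" and T: "T > 0"
    and max: "\<And>y. y \<ge> 0 \<Longrightarrow> y - \<kappa> y \<le> kt"
  shows "ereal (set_lebesgue_integral lborel {0..T} (\<lambda>t. a t \<omega>) - T * kt) \<le> cost_int \<kappa> T a \<omega>"
proof -
  define C where "C = kt + \<kappa> 0"
  have C: "C \<ge> 0" using max[of 0] unfolding C_def by simp
  define Ic where "Ic = (\<integral>\<^sup>+t. indicator {0..T} t * ennreal (\<kappa> (a t \<omega>) - \<kappa> 0) \<partial>lborel)"
  have ci: "cost_int \<kappa> T a \<omega> = ereal (T * \<kappa> 0) + enn2ereal Ic" unfolding cost_int_def Ic_def by simp
  show ?thesis
  proof (cases "set_integrable lborel {0..T} (\<lambda>t. a t \<omega>)")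
    case True
    define f where "f t = indicator {0..T} t * (a t \<omega> - C)" for t
    have ci2: "set_integrable lborel {0..T} (\<lambda>t. C)"
      unfolding set_integrable_def using T by (intro integrable_indicator) (auto simp: emeasure_lborel_Icc_eq)
    have fi: "integrable lborel f"
      using set_integral_diff(1)[OF True ci2] unfolding set_integrable_def f_def by simp
    have fint: "integral\<^sup>L lborel f = set_lebesgue_integral lborel {0..T} (\<lambda>t. a t \<omega>) - C * T"
    proof -
      have "integral\<^sup>L lborel f = (LINT t:{0..T}|lborel. a t \<omega> - C)"
        unfolding f_def set_lebesgue_integral_def by simp
      also have "\<dots> = set_lebesgue_integral lborel {0..T} (\<lambda>t. a t \<omega>) - (LINT t:{0..T}|lborel. C)"
        by (rule set_integral_diff(2)[OF True ci2])
      also have "(LINT t:{0..T}|lborel. C) = C * T" using T by (subst set_integral_const) auto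
      finally show ?thesis .
    qed
    have r1: "integral\<^sup>L lborel f \<le> integral\<^sup>L lborel (\<lambda>t. max 0 (f t))"
      by (intro integral_mono fi) (auto intro: integrable_max[OF _ fi])
    have "ennreal (integral\<^sup>L lborel (\<lambda>t. max 0 (f t))) = (\<integral>\<^sup>+t. ennreal (max 0 (f t)) \<partial>lborel)"
      by (rule nn_integral_eq_integral[symmetric]) (auto intro: integrable_max[OF _ fi])
    also have "\<dots> \<le> Ic"
      unfolding Ic_def ennreal_max_0
    proof (intro nn_integral_mono)
      fix t
      show "ennreal (f t) \<le> indicator {0..T} t * ennreal (\<kappa> (a t \<omega>) - \<kappa> 0)"
      proof (cases "t \<in> {0..T}")
        case True
        have "a t \<omega> - C \<le> \<kappa> (a t \<omega>) - \<kappa> 0" using max[OF nn[OF True]] unfolding C_def by simp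
        then show ?thesis using True unfolding f_def by (simp add: ennreal_leI)
      next
        case False then show ?thesis unfolding f_def by simp
      qed
    qed
    finally have r2: "ennreal (integral\<^sup>L lborel (\<lambda>t. max 0 (f t))) \<le> Ic" .
    have p: "integral\<^sup>L lborel (\<lambda>t. max 0 (f t)) \<ge> 0" by (intro integral_nonneg_AE) auto
    have "ereal (integral\<^sup>L lborel (\<lambda>t. max 0 (f t))) \<le> enn2ereal Ic"
      using r2 p by (metis enn2ereal_ennreal less_eq_ennreal.rep_eq)
    then have "ereal (integral\<^sup>L lborel f) \<le> enn2ereal Ic" using r1 by (meson ereal_less_eq(3) order_trans)
    then have "ereal (T * \<kappa> 0) + ereal (integral\<^sup>L lborel f) \<le> cost_int \<kappa> T a \<omega>"
      unfolding ci by (rule add_left_mono)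
    moreover have "T * \<kappa> 0 + integral\<^sup>L lborel f = set_lebesgue_integral lborel {0..T} (\<lambda>t. a t \<omega>) - T * kt"
      unfolding fint C_def by (simp add: algebra_simps)
    ultimately show ?thesis by simp
  next
    case False
    then have "set_lebesgue_integral lborel {0..T} (\<lambda>t. a t \<omega>) = 0"
      unfolding set_integrable_def set_lebesgue_integral_def by (simp add: not_integrable_integral_eq)
    moreover have "ereal (- T * kt) \<le> ereal (T * \<kappa> 0)" using max[of 0] T mult_nonneg_nonneg[of T "kt + \<kappa> 0"] by (simp add: algebra_simps)
    moreover have "ereal (T * \<kappa> 0) \<le> cost_int \<kappa> T a \<omega>" unfolding ci by (rule add_increasing2) (auto simp: enn2ereal_nonneg)
    ultimately have "ereal (set_lebesgue_integral lborel {0..T} (\<lambda>t. a t \<omega>) - T * kt) \<le> ereal (T * \<kappa> 0)"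
      "ereal (T * \<kappa> 0) \<le> cost_int \<kappa> T a \<omega>" by simp_all
    then show ?thesis by (rule order_trans)
  qed
qed

lemma final_real:
  fixes a b r Q :: real
  assumes a: "a \<ge> 0" and b: "b > 0" and r: "0 < r" "r < 1" and Q: "Q > 0"
    and H: "\<And>\<alpha>. \<alpha> > 0 \<Longrightarrow> Q \<le> \<alpha> powr r * b powr (1 - r) * (r / \<alpha> * a + (1 - r))"
  shows "(Q / b powr (1 - r)) powr (1 / r) \<le> a"
proof (cases "a = 0")
  case True
  define \<alpha> where "\<alpha> = (Q / (2 * b powr (1 - r))) powr (1 / r)"
  have ap: "\<alpha> > 0" using Q b unfolding \<alpha>_def by simp
  have "\<alpha> powr r = Q / (2 * b powr (1 - r))" unfolding \<alpha>_def using Q b r by (simp add: powr_powr)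
  then have "\<alpha> powr r * b powr (1 - r) * (r / \<alpha> * a + (1 - r)) = Q / 2 * (1 - r)"
    using True b by simp
  also have "\<dots> < Q" using Q r by (simp add: field_simps add_pos_pos)
  finally show ?thesis using H[OF ap] by simp
next
  case False
  then have ap: "a > 0" using a by simp
  have "Q \<le> a powr r * b powr (1 - r)" using H[OF ap] ap by simp
  then have "Q / b powr (1 - r) \<le> a powr r" using b by (simp add: divide_simps)
  then have "(Q / b powr (1 - r)) powr (1 / r) \<le> (a powr r) powr (1 / r)"
    by (intro powr_mono2) (use r Q b in auto)
  also have "\<dots> = a" using ap r by (simp add: powr_powr)
  finally show ?thesis .
qed

theorem proposition3p2:
  fixes M :: "'a measure" and B :: "real \<Rightarrow> 'a \<Rightarrow> real" and \<kappa> :: "real \<Rightarrow> real"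
    and T x0 y0 \<gamma>P \<gamma>A :: real
  assumes T: "T > 0" and gP: "\<gamma>P > 0" and gA: "\<gamma>A > 0"
    and BM: "brownian_motion M T B"
    and kappa: "cost_function \<kappa>"
  defines "r \<equiv> \<gamma>A / (\<gamma>A + \<gamma>P)"
    and "c \<equiv> exp (T * \<gamma>P * (- kappa_tilde \<kappa> 1 + \<gamma>P * \<gamma>A / (2 * (\<gamma>A + \<gamma>P))))"
  shows "(\<forall>W a. W \<in> Wset M T B \<and> a \<in> H2 M T B \<and> PC M T \<kappa> \<gamma>A y0 W a \<longrightarrow>
            ennpowr (\<integral>\<^sup>+\<omega>. ennpowr (absU \<gamma>P (ereal (XT x0 T B a \<omega>) - cost_int \<kappa> T a \<omega>)) r \<partial>M) (1 / r)
              \<ge> ennreal (exp (- \<gamma>P * x0) * c)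
          \<and> - enn2ereal (\<integral>\<^sup>+\<omega>. absU \<gamma>P (ereal (XT x0 T B a \<omega> - W \<omega>)) \<partial>M)
              \<le> ereal (U \<gamma>P (x0 - y0) * c))
     \<and> (let astar = (\<lambda>t \<omega>. kappa_star \<kappa> 1) in
          ennpowr (\<integral>\<^sup>+\<omega>. ennpowr (absU \<gamma>P (ereal (XT x0 T B astar \<omega>) - cost_int \<kappa> T astar \<omega>)) r \<partial>M) (1 / r)
            = ennreal (exp (- \<gamma>P * x0) * c))"
proof -
  obtain xs where xs: "xs \<ge> 0" and mx: "\<And>y. y \<ge> 0 \<Longrightarrow> y - \<kappa> y \<le> xs - \<kappa> xs"
    and ktd: "kappa_tilde \<kappa> 1 = xs - \<kappa> xs" and ks: "kappa_star \<kappa> 1 = xs"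
    using kappa_facts[OF kappa] by blast
  define kt where "kt = xs - \<kappa> xs"
  have r: "0 < r" "r < 1" using gP gA unfolding r_def by (auto simp: field_simps)
  have kc: "continuous_on {0..} \<kappa>" and kmono: "mono_on {0..} \<kappa>"
    using kappa unfolding cost_function_def by auto
  have BTm: "B T \<in> borel_measurable M" using BM T unfolding brownian_motion_def by auto
  define q where "q = - \<gamma>P * r * (x0 + T * kt) + (\<gamma>P * r)^2 * T / 2"
  have ce: "exp (- \<gamma>P * x0) * c = exp (q / r)"
  proof -
    have "q / r = - \<gamma>P * (x0 + T * kt) + \<gamma>P^2 * r * T / 2"
      using r(1) unfolding q_def by (simp add: field_simps power2_eq_square)
    also have "\<dots> = - \<gamma>P * x0 + T * \<gamma>P * (- kt + \<gamma>P * \<gamma>A / (2 * (\<gamma>A + \<gamma>P)))"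
      using gP gA unfolding r_def by (simp add: field_simps power2_eq_square)
    finally have "q / r = - \<gamma>P * x0 + T * \<gamma>P * (- kt + \<gamma>P * \<gamma>A / (2 * (\<gamma>A + \<gamma>P)))" .
    then show ?thesis unfolding c_def ktd kt_def by (simp add: exp_add[symmetric])
  qed
  have Qint: "(\<integral>\<^sup>+\<omega>. ennreal (exp (r * (- \<gamma>P * (x0 + B T \<omega> + T * kt)))) \<partial>M) = ennreal (exp q)"
  proof -
    have "(\<integral>\<^sup>+\<omega>. ennreal (exp (r * (- \<gamma>P * (x0 + B T \<omega> + T * kt)))) \<partial>M)
        = (\<integral>\<^sup>+\<omega>. ennreal (exp (- \<gamma>P * r * (x0 + T * kt))) * ennreal (exp ((- \<gamma>P * r) * B T \<omega>)) \<partial>M)"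
      by (intro nn_integral_cong) (simp add: exp_add[symmetric] flip: ennreal_mult, simp add: algebra_simps)
    also have "\<dots> = ennreal (exp (- \<gamma>P * r * (x0 + T * kt))) * ennreal (exp ((- \<gamma>P * r)^2 * T / 2))"
      by (subst nn_integral_cmult) (use BTm gauss_mgf[OF BM T, of "- \<gamma>P * r"] in auto)
    also have "\<dots> = ennreal (exp q)" unfolding q_def by (simp add: exp_add[symmetric] flip: ennreal_mult)
    finally show ?thesis .
  qed
  have powQ: "ennpowr (ennreal (exp q)) (1 / r) = ennreal (exp (- \<gamma>P * x0) * c)"
    unfolding ennpowr_exp ce by simp
  have part1: "ennreal (exp q) \<le> (\<integral>\<^sup>+\<omega>. ennpowr (absU \<gamma>P (ereal (XT x0 T B a \<omega>) - cost_int \<kappa> T a \<omega>)) r \<partial>M)"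
    if a: "a \<in> H2 M T B" for a
  proof -
    have "(\<integral>\<^sup>+\<omega>. ennreal (exp (r * (- \<gamma>P * (x0 + B T \<omega> + T * kt)))) \<partial>M)
       \<le> (\<integral>\<^sup>+\<omega>. ennpowr (absU \<gamma>P (ereal (XT x0 T B a \<omega>) - cost_int \<kappa> T a \<omega>)) r \<partial>M)"
    proof (intro nn_integral_mono)
      fix \<omega> assume w: "\<omega> \<in> space M"
      have nn: "t \<in> {0..T} \<Longrightarrow> a t \<omega> \<ge> 0" for t using a w unfolding H2_def by auto
      have cl: "ereal (set_lebesgue_integral lborel {0..T} (\<lambda>t. a t \<omega>) - T * kt) \<le> cost_int \<kappa> T a \<omega>"
        by (rule cost_lower[where a=a and \<omega>=\<omega>, OF nn T]) (use mx kt_def in auto)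
      have "ereal (XT x0 T B a \<omega>) - cost_int \<kappa> T a \<omega>
          \<le> ereal (XT x0 T B a \<omega>) - ereal (set_lebesgue_integral lborel {0..T} (\<lambda>t. a t \<omega>) - T * kt)"
        by (rule ereal_minus_mono[OF order_refl cl])
      also have "\<dots> = ereal (x0 + B T \<omega> + T * kt)" unfolding XT_def by simp
      finally have z: "ereal (XT x0 T B a \<omega>) - cost_int \<kappa> T a \<omega> \<le> ereal (x0 + B T \<omega> + T * kt)" .
      have "ennreal (exp (r * (- \<gamma>P * (x0 + B T \<omega> + T * kt)))) = ennpowr (ennreal (exp (- \<gamma>P * (x0 + B T \<omega> + T * kt)))) r"
        by (simp add: ennpowr_exp)
      also have "\<dots> \<le> ennpowr (absU \<gamma>P (ereal (XT x0 T B a \<omega>) - cost_int \<kappa> T a \<omega>)) r"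
        by (rule ennpowr_mono[OF r(1) absU_lower[OF z gP]])
      finally show "ennreal (exp (r * (- \<gamma>P * (x0 + B T \<omega> + T * kt)))) \<le> ennpowr (absU \<gamma>P (ereal (XT x0 T B a \<omega>) - cost_int \<kappa> T a \<omega>)) r" .
    qed
    then show ?thesis unfolding Qint .
  qed
  have claim1: "ennpowr (\<integral>\<^sup>+\<omega>. ennpowr (absU \<gamma>P (ereal (XT x0 T B a \<omega>) - cost_int \<kappa> T a \<omega>)) r \<partial>M) (1 / r)
              \<ge> ennreal (exp (- \<gamma>P * x0) * c)" if a: "a \<in> H2 M T B" for a
    using ennpowr_mono[OF _ part1[OF a], of "1/r"] r powQ by simp
  have claim2: "- enn2ereal (\<integral>\<^sup>+\<omega>. absU \<gamma>P (ereal (XT x0 T B a \<omega> - W \<omega>)) \<partial>M) \<le> ereal (U \<gamma>P (x0 - y0) * c)"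
    if W: "W \<in> Wset M T B" and a: "a \<in> H2 M T B" and pc: "PC M T \<kappa> \<gamma>A y0 W a" for W a
  proof -
    define b where "b = exp (- \<gamma>A * y0)"
    have bp: "b > 0" unfolding b_def by simp
    define Ic where "Ic \<omega> = (\<integral>\<^sup>+t. indicator {0..T} t * ennreal (\<kappa> (a t \<omega>) - \<kappa> 0) \<partial>lborel)" for \<omega>
    define F where "F \<omega> = absU \<gamma>P (ereal (XT x0 T B a \<omega> - W \<omega>))" for \<omega>
    define G where "G \<omega> = absU \<gamma>A (ereal (W \<omega>) - cost_int \<kappa> T a \<omega>)" for \<omega>
    have Wm[measurable]: "W \<in> borel_measurable M"
    proof -
      have fs: "filt M B T \<subseteq> sets M" using filt_sub[OF BM] T by auto
      then have fp: "filt M B T \<subseteq> Pow (space M)" using sets.sets_into_space by blast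
      have "measurable (sigma (space M) (filt M B T)) borel \<subseteq> measurable M borel"
        by (rule measurable_mono) (use fp fs sets.sigma_sets_subset[OF fs] in auto)
      then show ?thesis using W unfolding Wset_def by auto
    qed
    have XTm[measurable]: "(\<lambda>\<omega>. XT x0 T B a \<omega>) \<in> borel_measurable M" by (rule XT_meas[OF BM T a])
    have Icm[measurable]: "Ic \<in> borel_measurable M" unfolding Ic_def by (rule Icost_meas[OF BM T a kc])
    have Fm: "F \<in> borel_measurable M" unfolding F_def absU_ereal by measurable
    have Geq: "G \<omega> = (if Ic \<omega> = \<infinity> then \<infinity> else ennreal (exp (- \<gamma>A * (W \<omega> - T * \<kappa> 0 - enn2real (Ic \<omega>)))))" for \<omega>
    proof (cases "Ic \<omega> = \<infinity>")
      case True
      then have "cost_int \<kappa> T a \<omega> = \<infinity>" unfolding cost_int_def Ic_def by simp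
      then show ?thesis using True gA unfolding G_def by (simp add: absU_inf absU_minf)
    next
      case False
      then obtain v where v: "Ic \<omega> = ennreal v" "v \<ge> 0" by (cases "Ic \<omega>") auto
      have "cost_int \<kappa> T a \<omega> = ereal (T * \<kappa> 0) + enn2ereal (Ic \<omega>)" unfolding cost_int_def Ic_def by simp
      then have "cost_int \<kappa> T a \<omega> = ereal (T * \<kappa> 0 + v)" using v by simp
      then show ?thesis using False v unfolding G_def by (simp add: absU_ereal algebra_simps)
    qed
    have Gm: "G \<in> borel_measurable M" unfolding Geq by measurable
    have Gint: "(\<integral>\<^sup>+\<omega>. G \<omega> \<partial>M) \<le> ennreal b"
    proof -
      have "ereal (- b) \<le> - enn2ereal (\<integral>\<^sup>+\<omega>. G \<omega> \<partial>M)"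
        using pc unfolding PC_def U_def G_def b_def by simp
      then have "- ereal b \<le> - enn2ereal (\<integral>\<^sup>+\<omega>. G \<omega> \<partial>M)" by simp
      then have "enn2ereal (\<integral>\<^sup>+\<omega>. G \<omega> \<partial>M) \<le> ereal b" by (rule ereal_minus_le_minus[THEN iffD1])
      then show ?thesis using bp by (metis enn2ereal_ennreal less_eq_ennreal.rep_eq less_imp_le)
    qed
    define A where "A = (\<integral>\<^sup>+\<omega>. F \<omega> \<partial>M)"
    define L where "L = exp (- \<gamma>P * (x0 - y0)) * c"
    have "ennreal L \<le> A"
    proof (cases "A = \<infinity>")
      case True then show ?thesis by simp
    next
      case False
      then obtain av where Aa: "A = ennreal av" and av: "av \<ge> 0" by (cases A) auto
      have H: "exp q \<le> \<alpha> powr r * b powr (1 - r) * (r / \<alpha> * av + (1 - r))" if al: "\<alpha> > 0" for \<alpha>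
      proof -
        define C1 where "C1 = \<alpha> powr r * b powr (1 - r)"
        have C1: "C1 > 0" unfolding C1_def using al bp by simp
        have pt: "ennpowr (absU \<gamma>P (ereal (XT x0 T B a \<omega>) - cost_int \<kappa> T a \<omega>)) r
             \<le> ennreal C1 * (ennreal (r / \<alpha>) * F \<omega> + ennreal ((1 - r) / b) * G \<omega>)" if w: "\<omega> \<in> space M" for \<omega>
        proof -
          have Kge: "ereal (T * \<kappa> 0) \<le> cost_int \<kappa> T a \<omega>"
            unfolding cost_int_def by (rule add_increasing2) (auto simp: enn2ereal_nonneg)
          show ?thesis
          proof (cases "cost_int \<kappa> T a \<omega>")
            case (real k)
            have y: "exp (r * (- \<gamma>P * (XT x0 T B a \<omega> - k))) \<le> C1 * (r / \<alpha> * exp (- \<gamma>P * (XT x0 T B a \<omega> - W \<omega>)) + (1 - r) / b * exp (- \<gamma>A * (W \<omega> - k)))"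
              unfolding C1_def by (rule young_pt[OF gP gA al bp, folded r_def])
            have "ennpowr (absU \<gamma>P (ereal (XT x0 T B a \<omega>) - cost_int \<kappa> T a \<omega>)) r = ennreal (exp (r * (- \<gamma>P * (XT x0 T B a \<omega> - k))))"
              using real by (simp add: absU_ereal ennpowr_exp)
            also have "\<dots> \<le> ennreal (C1 * (r / \<alpha> * exp (- \<gamma>P * (XT x0 T B a \<omega> - W \<omega>)) + (1 - r) / b * exp (- \<gamma>A * (W \<omega> - k))))"
              by (rule ennreal_leI[OF y])
            also have "\<dots> = ennreal C1 * (ennreal (r / \<alpha>) * F \<omega> + ennreal ((1 - r) / b) * G \<omega>)"
              unfolding F_def G_def using real C1 al r bp
              by (simp add: absU_ereal ennreal_mult[symmetric] ennreal_plus[symmetric] del: ennreal_plus)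
            finally show ?thesis .
          next
            case PInf
            then have "G \<omega> = \<infinity>" unfolding G_def using gA by (simp add: absU_inf absU_minf)
            moreover have "ennreal ((1 - r) / b) > 0" "ennreal C1 > 0" using r bp C1 by auto
            ultimately have "ennreal C1 * (ennreal (r / \<alpha>) * F \<omega> + ennreal ((1 - r) / b) * G \<omega>) = \<infinity>"
              using r bp by (simp add: ennreal_mult_eq_top_iff)
            then show ?thesis by simp
          next
            case MInf
            then show ?thesis using Kge by simp
          qed
        qed
        have "ennreal (exp q) \<le> (\<integral>\<^sup>+\<omega>. ennpowr (absU \<gamma>P (ereal (XT x0 T B a \<omega>) - cost_int \<kappa> T a \<omega>)) r \<partial>M)"
          by (rule part1[OF a])
        also have "\<dots> \<le> (\<integral>\<^sup>+\<omega>. ennreal C1 * (ennreal (r / \<alpha>) * F \<omega> + ennreal ((1 - r) / b) * G \<omega>) \<partial>M)"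
          by (rule nn_integral_mono) (rule pt)
        also have "\<dots> = ennreal C1 * (ennreal (r / \<alpha>) * A + ennreal ((1 - r) / b) * (\<integral>\<^sup>+\<omega>. G \<omega> \<partial>M))"
          unfolding A_def using Fm Gm
          by (simp add: nn_integral_cmult nn_integral_add)
        also have "\<dots> \<le> ennreal C1 * (ennreal (r / \<alpha>) * ennreal av + ennreal ((1 - r) / b) * ennreal b)"
          unfolding Aa by (intro mult_left_mono add_mono Gint) auto
        also have "\<dots> = ennreal (C1 * (r / \<alpha> * av + (1 - r)))"
          using C1 al r bp av by (simp add: ennreal_mult[symmetric] ennreal_plus[symmetric] del: ennreal_plus)
        finally show ?thesis unfolding C1_def using C1 al r av by (subst (asm) ennreal_le_iff) (auto intro!: mult_nonneg_nonneg add_nonneg_nonneg)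
      qed
      have fr: "(exp q / b powr (1 - r)) powr (1 / r) \<le> av"
        by (rule final_real[OF av bp r]) (use H in auto)
      have "(exp q / b powr (1 - r)) powr (1 / r) = L"
      proof -
        have e2: "exp q / b powr (1 - r) = exp (q + \<gamma>A * y0 * (1 - r))"
          unfolding b_def powr_def by (simp add: exp_diff[symmetric] algebra_simps)
        have e: "\<gamma>A * (1 - r) = \<gamma>P * r" using gP gA unfolding r_def by (simp add: field_simps)
        have "(q + \<gamma>A * y0 * (1 - r)) / r = q / r + y0 * (\<gamma>A * (1 - r)) / r"
          by (simp add: add_divide_distrib[symmetric] algebra_simps)
        also have "\<dots> = q / r + \<gamma>P * y0" unfolding e using r(1) by simp
        finally have e4: "(q + \<gamma>A * y0 * (1 - r)) / r = q / r + \<gamma>P * y0" .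
        have "(exp q / b powr (1 - r)) powr (1 / r) = exp ((q + \<gamma>A * y0 * (1 - r)) / r)"
          unfolding e2 by (simp add: powr_def)
        also have "\<dots> = exp (q / r) * exp (\<gamma>P * y0)" unfolding e4 by (simp add: exp_add)
        also have "\<dots> = L" unfolding L_def ce[symmetric] by (simp add: algebra_simps exp_add[symmetric])
        finally show ?thesis .
      qed
      then show ?thesis using fr Aa by (simp add: ennreal_leI)
    qed
    then have "ereal L \<le> enn2ereal A" 
      by (metis enn2ereal_ennreal less_eq_ennreal.rep_eq L_def c_def exp_ge_zero mult_nonneg_nonneg)
    then have "- enn2ereal A \<le> - ereal L" by (rule ereal_minus_le_minus[THEN iffD2])
    then show ?thesis unfolding U_def A_def F_def L_def by simp
  qed
  have claim3: "(let astar = (\<lambda>t \<omega>. kappa_star \<kappa> 1) in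
          ennpowr (\<integral>\<^sup>+\<omega>. ennpowr (absU \<gamma>P (ereal (XT x0 T B astar \<omega>) - cost_int \<kappa> T astar \<omega>)) r \<partial>M) (1 / r)
            = ennreal (exp (- \<gamma>P * x0) * c))"
  proof -
    have k0: "\<kappa> 0 \<le> \<kappa> xs" using kmono xs by (auto intro: mono_onD)
    have XTc: "XT x0 T B (\<lambda>t \<omega>. xs) \<omega> = x0 + T * xs + B T \<omega>" for \<omega>
      unfolding XT_def using T by (subst set_integral_const) auto
    have "(\<integral>\<^sup>+t. indicator {0..T} t * ennreal (\<kappa> xs - \<kappa> 0) \<partial>lborel) = ennreal (\<kappa> xs - \<kappa> 0) * ennreal T"
      using T by (subst mult.commute) (simp add: nn_integral_cmult_indicator)
    also have "\<dots> = ennreal ((\<kappa> xs - \<kappa> 0) * T)" using T k0 by (simp add: ennreal_mult)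
    finally have "cost_int \<kappa> T (\<lambda>t \<omega>. xs) \<omega> = ereal (T * \<kappa> 0) + ereal ((\<kappa> xs - \<kappa> 0) * T)" for \<omega>
      unfolding cost_int_def using T k0 by simp
    then have Kc: "cost_int \<kappa> T (\<lambda>t \<omega>. xs) \<omega> = ereal (T * \<kappa> xs)" for \<omega>
      by (simp add: algebra_simps)
    have I3: "(\<integral>\<^sup>+\<omega>. ennpowr (absU \<gamma>P (ereal (XT x0 T B (\<lambda>t \<omega>. xs) \<omega>) - cost_int \<kappa> T (\<lambda>t \<omega>. xs) \<omega>)) r \<partial>M)
       = (\<integral>\<^sup>+\<omega>. ennreal (exp (r * (- \<gamma>P * (x0 + B T \<omega> + T * kt)))) \<partial>M)"
    proof (intro nn_integral_cong)
      fix \<omega>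
      have "ereal (XT x0 T B (\<lambda>t \<omega>. xs) \<omega>) - cost_int \<kappa> T (\<lambda>t \<omega>. xs) \<omega> = ereal (x0 + B T \<omega> + T * kt)"
        unfolding XTc Kc kt_def by (simp add: algebra_simps)
      then show "ennpowr (absU \<gamma>P (ereal (XT x0 T B (\<lambda>t \<omega>. xs) \<omega>) - cost_int \<kappa> T (\<lambda>t \<omega>. xs) \<omega>)) r
          = ennreal (exp (r * (- \<gamma>P * (x0 + B T \<omega> + T * kt))))"
        by (simp add: absU_ereal ennpowr_exp)
    qed
    show ?thesis unfolding Let_def ks I3 Qint by (rule powQ)
  qed
  show ?thesis using claim1 claim2 claim3 by blast
qed

end
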